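(* For every admissible pair $(a,b)$, equality of morphisms in the canonical cube category $\mathbb{C}_{(a,b)}$ is decidable; that is, there is an algorithm which, given two terms (or tuples of terms) of $L_{(a,b)}$ in a common variable context, decides whether they are equal in $\mathbb{C}_{(a,b)}$.
   Context: Structural rules: $\mathsf{w}$ (weakening), $\mathsf{e}$ (exchange), $\mathsf{c}$ (contraction); admissible sets $a$: $\emptyset,\{\mathsf w\},\{\mathsf e\},\{\mathsf w,\mathsf e\},\{\mathsf e,\mathsf c\},\{\mathsf w,\mathsf e,\mathsf c\}$. Admissible signatures $b$: $(0,1)$, $(0,1,\vee)$, $(0,1,\wedge)$, $(0,1,\vee,\wedge)$, $(0,1,{}')$, $(0,1,\vee,\wedge,{}')$. Terms of $L_{(a,b)}$ in context $x_1,\dots,x_m$ are built from the variables and symbols of $b$; listing all variable occurrences (of a tuple of terms) left to right, every variable occurs unless $\mathsf w\in a$, they occur in order unless $\mathsf e\in a$, and none is duplicated unless $\mathsf c\in a$. The canonical cube category $\mathbb{C}_{(a,b)}$ has objects $[n]$, $n\ge0$; morphisms $[m]\to[n]$ are such $n$-tuples of terms in context $x_1,\dots,x_m$, identified when they define the same function $[0,1]^m\to[0,1]^n$ under $0,1$ = endpoints, $\vee=\max$, $\wedge=\min$, $x'=1-x$; composition is substitution. *)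

theory Defs
  imports Complex_Main "HOL-Library.Nat_Bijection"
begin

datatype srule = W | E | C

definition admissible_rules :: "srule set \<Rightarrow> bool" where
  "admissible_rules a \<longleftrightarrow> a \<in> {{}, {W}, {E}, {W,E}, {E,C}, {W,E,C}}"

text \<open>Operation symbols beyond the constants 0,1 (which are always present).\<close>
datatype sop = SJoin | SMeet | SNeg

definition admissible_sig :: "sop set \<Rightarrow> bool" where
  "admissible_sig b \<longleftrightarrow> b \<in> {{}, {SJoin}, {SMeet}, {SJoin,SMeet}, {SNeg}, {SJoin,SMeet,SNeg}}"

section \<open>Terms (variable x_(i+1) is represented by Var i)\<close>

datatype tm = Var nat | Zero | One | Join tm tm | Meet tm tm | Neg tm

fun in_sig :: "sop set \<Rightarrow> tm \<Rightarrow> bool" where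
  "in_sig b (Var i) = True"
| "in_sig b Zero = True"
| "in_sig b One = True"
| "in_sig b (Join s t) = (SJoin \<in> b \<and> in_sig b s \<and> in_sig b t)"
| "in_sig b (Meet s t) = (SMeet \<in> b \<and> in_sig b s \<and> in_sig b t)"
| "in_sig b (Neg t) = (SNeg \<in> b \<and> in_sig b t)"

fun occs :: "tm \<Rightarrow> nat list" where
  "occs (Var i) = [i]"
| "occs Zero = []"
| "occs One = []"
| "occs (Join s t) = occs s @ occs t"
| "occs (Meet s t) = occs s @ occs t"
| "occs (Neg t) = occs t"

definition wf_tuple :: "srule set \<Rightarrow> sop set \<Rightarrow> nat \<Rightarrow> tm list \<Rightarrow> bool" where
  "wf_tuple a b m ts \<longleftrightarrow>
     (\<forall>t\<in>set ts. in_sig b t) \<and>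
     (let vs = concat (map occs ts) in
        (\<forall>v\<in>set vs. v < m) \<and>
        (W \<notin> a \<longrightarrow> {..<m} \<subseteq> set vs) \<and>
        (E \<notin> a \<longrightarrow> sorted vs) \<and>
        (C \<notin> a \<longrightarrow> distinct vs))"

fun tm_eval :: "(nat \<Rightarrow> real) \<Rightarrow> tm \<Rightarrow> real" where
  "tm_eval x (Var i) = x i"
| "tm_eval x Zero = 0"
| "tm_eval x One = 1"
| "tm_eval x (Join s t) = max (tm_eval x s) (tm_eval x t)"
| "tm_eval x (Meet s t) = min (tm_eval x s) (tm_eval x t)"
| "tm_eval x (Neg t) = 1 - tm_eval x t"

text \<open>Equality of morphisms [m] -> [n] in the canonical cube category:
  same function [0,1]^m -> [0,1]^n.\<close>
definition same_morphism :: "nat \<Rightarrow> tm list \<Rightarrow> tm list \<Rightarrow> bool" where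
  "same_morphism m ts1 ts2 \<longleftrightarrow>
     length ts1 = length ts2 \<and>
     (\<forall>x::nat \<Rightarrow> real. (\<forall>i<m. 0 \<le> x i \<and> x i \<le> 1) \<longrightarrow>
        map (tm_eval x) ts1 = map (tm_eval x) ts2)"

datatype recf = Zf | Sf | Proj nat | Comp recf "recf list" | Prec recf recf | Mn recf

inductive recf_eval :: "recf \<Rightarrow> nat list \<Rightarrow> nat \<Rightarrow> bool" where
  zero: "recf_eval Zf xs 0"
| succ: "recf_eval Sf (x # xs) (Suc x)"
| proj: "i < length xs \<Longrightarrow> recf_eval (Proj i) xs (xs ! i)"
| comp: "length ys = length gs \<Longrightarrow> (\<forall>i<length gs. recf_eval (gs ! i) xs (ys ! i)) \<Longrightarrow>
         recf_eval f ys y \<Longrightarrow> recf_eval (Comp f gs) xs y"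
| prec0: "recf_eval f xs y \<Longrightarrow> recf_eval (Prec f g) (0 # xs) y"
| precS: "recf_eval (Prec f g) (n # xs) r \<Longrightarrow> recf_eval g (n # r # xs) y \<Longrightarrow>
          recf_eval (Prec f g) (Suc n # xs) y"
| mn: "recf_eval f (y # xs) 0 \<Longrightarrow> (\<forall>z<y. \<exists>v. recf_eval f (z # xs) (Suc v)) \<Longrightarrow>
       recf_eval (Mn f) xs y"

fun tm_code :: "tm \<Rightarrow> nat" where
  "tm_code (Var i) = prod_encode (0, i)"
| "tm_code Zero = prod_encode (1, 0)"
| "tm_code One = prod_encode (2, 0)"
| "tm_code (Join s t) = prod_encode (3, prod_encode (tm_code s, tm_code t))"
| "tm_code (Meet s t) = prod_encode (4, prod_encode (tm_code s, tm_code t))"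
| "tm_code (Neg t) = prod_encode (5, tm_code t)"

definition input_code :: "nat \<Rightarrow> tm list \<Rightarrow> tm list \<Rightarrow> nat" where
  "input_code m ts1 ts2 =
     prod_encode (m, prod_encode (list_encode (map tm_code ts1), list_encode (map tm_code ts2)))"

end

theory Submission
  imports Defs
begin


definition rf :: "nat \<Rightarrow> (nat list \<Rightarrow> nat) \<Rightarrow> bool" where
  "rf n g \<longleftrightarrow> (\<exists>f. \<forall>xs. length xs = n \<longrightarrow> recf_eval f xs (g xs))"

lemma rf_cong: "rf n f \<Longrightarrow> (\<And>xs. length xs = n \<Longrightarrow> f xs = g xs) \<Longrightarrow> rf n g"
  unfolding rf_def by metis

lemma rf_const: "rf n (\<lambda>_. c)"
proof (induction c)
  case 0 show ?case unfolding rf_def by (metis recf_eval.zero)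
next
  case (Suc c)
  then obtain F where F: "\<forall>xs. length xs = n \<longrightarrow> recf_eval F xs c" unfolding rf_def by blast
  have "recf_eval (Comp Sf [F]) xs (Suc c)" if "length xs = n" for xs
    by (rule recf_eval.comp[where ys="[c]"]) (use F that in \<open>auto intro: recf_eval.succ[where xs="[]", simplified]\<close>)
  then show ?case unfolding rf_def by blast
qed

lemma rf_proj: "i < n \<Longrightarrow> rf n (\<lambda>xs. xs ! i)"
  unfolding rf_def by (metis recf_eval.proj)

lemma list_choice: "(\<forall>x\<in>set xs. \<exists>y. P x y) \<Longrightarrow> \<exists>ys. length ys = length xs \<and> (\<forall>i<length xs. P (xs!i) (ys!i))"
proof (induction xs)
  case Nil then show ?case by simp
next
  case (Cons a xs)
  then obtain y ys where "P a y" "length ys = length xs" "\<forall>i<length xs. P (xs!i) (ys!i)" by auto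
  then show ?case by (intro exI[of _ "y#ys"]) (auto simp: nth_Cons split: nat.split)
qed

lemma rf_comp_list:
  assumes h: "rf k h" and len: "length gs = k" and gs: "\<forall>g\<in>set gs. rf n g"
  shows "rf n (\<lambda>xs. h (map (\<lambda>g. g xs) gs))"
proof -
  obtain H where H: "\<forall>xs. length xs = k \<longrightarrow> recf_eval H xs (h xs)" using h unfolding rf_def by blast
  obtain Fs where Fs: "length Fs = length gs" "\<forall>i<length gs. \<forall>xs. length xs = n \<longrightarrow> recf_eval (Fs!i) xs ((gs!i) xs)"
    using list_choice[of gs "\<lambda>g F. \<forall>xs. length xs = n \<longrightarrow> recf_eval F xs (g xs)"] gs unfolding rf_def by blast
  have "recf_eval (Comp H Fs) xs (h (map (\<lambda>g. g xs) gs))" if "length xs = n" for xs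
    by (rule recf_eval.comp[where ys="map (\<lambda>g. g xs) gs"]) (use Fs H len that in auto)
  then show ?thesis unfolding rf_def by blast
qed

lemma rf_comp1: "rf 1 (\<lambda>ys. F (ys!0)) \<Longrightarrow> rf n e1 \<Longrightarrow> rf n (\<lambda>xs. F (e1 xs))"
  using rf_comp_list[of 1 "\<lambda>ys. F (ys!0)" "[e1]" n] by simp

lemma rf_comp2: "rf 2 (\<lambda>ys. F (ys!0) (ys!1)) \<Longrightarrow> rf n e1 \<Longrightarrow> rf n e2 \<Longrightarrow> rf n (\<lambda>xs. F (e1 xs) (e2 xs))"
  using rf_comp_list[of 2 "\<lambda>ys. F (ys!0) (ys!1)" "[e1,e2]" n] by simp

lemma rf_comp3: "rf 3 (\<lambda>ys. F (ys!0) (ys!1) (ys!2)) \<Longrightarrow> rf n e1 \<Longrightarrow> rf n e2 \<Longrightarrow> rf n e3 \<Longrightarrow>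
   rf n (\<lambda>xs. F (e1 xs) (e2 xs) (e3 xs))"
  using rf_comp_list[of 3 "\<lambda>ys. F (ys!0) (ys!1) (ys!2)" "[e1,e2,e3]" n] by (simp add: numeral_3_eq_3)

lemma rf_comp4: "rf 4 (\<lambda>ys. F (ys!0) (ys!1) (ys!2) (ys!3)) \<Longrightarrow> rf n e1 \<Longrightarrow> rf n e2 \<Longrightarrow> rf n e3 \<Longrightarrow> rf n e4 \<Longrightarrow>
   rf n (\<lambda>xs. F (e1 xs) (e2 xs) (e3 xs) (e4 xs))"
  using rf_comp_list[of 4 "\<lambda>ys. F (ys!0) (ys!1) (ys!2) (ys!3)" "[e1,e2,e3,e4]" n] by (simp add: eval_nat_numeral)

lemma rf_comp5: "rf 5 (\<lambda>ys. F (ys!0) (ys!1) (ys!2) (ys!3) (ys!4)) \<Longrightarrow> rf n e1 \<Longrightarrow> rf n e2 \<Longrightarrow> rf n e3 \<Longrightarrow> rf n e4 \<Longrightarrow> rf n e5 \<Longrightarrow>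
   rf n (\<lambda>xs. F (e1 xs) (e2 xs) (e3 xs) (e4 xs) (e5 xs))"
  using rf_comp_list[of 5 "\<lambda>ys. F (ys!0) (ys!1) (ys!2) (ys!3) (ys!4)" "[e1,e2,e3,e4,e5]" n] by (simp add: eval_nat_numeral)

lemma rf_prim:
  assumes f: "rf n f" and g: "rf (Suc (Suc n)) g"
    and H0: "\<And>xs. length xs = n \<Longrightarrow> H 0 xs = f xs"
    and HS: "\<And>k xs. length xs = n \<Longrightarrow> H (Suc k) xs = g (k # H k xs # xs)"
  shows "rf (Suc n) (\<lambda>xs. H (xs!0) (tl xs))"
proof -
  obtain F where F: "\<forall>xs. length xs = n \<longrightarrow> recf_eval F xs (f xs)" using f unfolding rf_def by blast
  obtain G where G: "\<forall>xs. length xs = Suc (Suc n) \<longrightarrow> recf_eval G xs (g xs)" using g unfolding rf_def by blast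
  have P: "recf_eval (Prec F G) (k # xs) (H k xs)" if "length xs = n" for k xs
  proof (induction k)
    case 0 show ?case using F H0 that by (auto intro: recf_eval.prec0)
  next
    case (Suc k) show ?case using Suc G HS that by (auto intro: recf_eval.precS)
  qed
  have "recf_eval (Prec F G) xs (H (xs!0) (tl xs))" if "length xs = Suc n" for xs
    using P[of "tl xs" "xs!0"] that by (cases xs) auto
  then show ?thesis unfolding rf_def by blast
qed

lemma rf_prim2:
  assumes f: "rf n f" and g: "rf n2 g" and "n2 = Suc (Suc n)" and "k = Suc n"
    and H0: "\<And>xs. length xs = n \<Longrightarrow> H 0 xs = f xs"
    and HS: "\<And>k xs. length xs = n \<Longrightarrow> H (Suc k) xs = g (k # H k xs # xs)"
  shows "rf k (\<lambda>xs. H (xs!0) (tl xs))"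
proof -
  have "rf (Suc n) (\<lambda>xs. H (xs!0) (tl xs))"
    by (rule rf_prim[OF f _ H0 HS]) (use g assms(3) in blast)+
  then show ?thesis using assms(4) by blast
qed

lemma rf_Suc0: "rf 1 (\<lambda>ys. Suc (ys!0))"
proof -
  have "recf_eval Sf xs (Suc (xs!0))" if "length xs = 1" for xs
    using that by (cases xs) (auto intro: recf_eval.succ)
  then show ?thesis unfolding rf_def by blast
qed

lemma rf_Suc: "rf n e \<Longrightarrow> rf n (\<lambda>xs. Suc (e xs))"
  by (rule rf_comp1[OF rf_Suc0])


lemma rf_pred0: "rf 1 (\<lambda>xs. xs!0 - 1)"
proof -
  have "rf 1 (\<lambda>xs. (\<lambda>k _. k - 1) (xs!0) (tl xs))"
  proof (rule rf_prim2[OF rf_const[of 0 0] rf_proj[of 0 2]])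
  qed auto
  then show ?thesis by simp
qed

lemma rf_sub0: "rf 2 (\<lambda>xs. xs!1 - xs!0)"
proof -
  have g: "rf 3 (\<lambda>ys. ys!1 - 1)" by (rule rf_comp1[OF rf_pred0 rf_proj]) simp
  have "rf 2 (\<lambda>xs. (\<lambda>k xs. xs!0 - k) (xs!0) (tl xs))"
  proof (rule rf_prim2[OF rf_proj[of 0 1] g])
  qed (auto simp: numeral_3_eq_3 diff_Suc split: nat.split)
  then show ?thesis by (rule rf_cong) (auto simp: nth_tl)
qed

lemma rf_sub: "rf n e1 \<Longrightarrow> rf n e2 \<Longrightarrow> rf n (\<lambda>xs. e1 xs - e2 xs)"
  using rf_comp2[of "\<lambda>a b. b - a" n e2 e1] rf_sub0 by simp

lemma rf_add0: "rf 2 (\<lambda>xs. xs!1 + xs!0)"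
proof -
  have g: "rf 3 (\<lambda>ys. Suc (ys!1))" by (rule rf_Suc[OF rf_proj]) simp
  have "rf 2 (\<lambda>xs. (\<lambda>k xs. xs!0 + k) (xs!0) (tl xs))"
  proof (rule rf_prim2[OF rf_proj[of 0 1] g])
  qed (auto simp: numeral_3_eq_3)
  then show ?thesis by (rule rf_cong) (auto simp: nth_tl)
qed

lemma rf_add: "rf n e1 \<Longrightarrow> rf n e2 \<Longrightarrow> rf n (\<lambda>xs. e1 xs + e2 xs)"
  using rf_comp2[of "\<lambda>a b. b + a" n e2 e1] rf_add0 by (simp add: add.commute)

lemma rf_mult0: "rf 2 (\<lambda>xs. xs!1 * xs!0)"
proof -
  have g: "rf 3 (\<lambda>ys. ys!1 + ys!2)" by (rule rf_add; rule rf_proj; simp)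
  have "rf 2 (\<lambda>xs. (\<lambda>k xs. xs!0 * k) (xs!0) (tl xs))"
  proof (rule rf_prim2[OF rf_const[of 1 0] g])
  qed (auto simp: numeral_3_eq_3)
  then show ?thesis by (rule rf_cong) (auto simp: nth_tl)
qed

lemma rf_mult: "rf n e1 \<Longrightarrow> rf n e2 \<Longrightarrow> rf n (\<lambda>xs. e1 xs * e2 xs)"
  using rf_comp2[of "\<lambda>a b. b * a" n e2 e1] rf_mult0 by (simp add: mult.commute)

lemma rf_ifz0: "rf 3 (\<lambda>xs. if xs!0 = 0 then xs!1 else xs!2)"
proof -
  have "rf 3 (\<lambda>xs. (\<lambda>k xs. if k = 0 then xs!0 else xs!1) (xs!0) (tl xs))"
  proof (rule rf_prim2[OF rf_proj[of 0 2] rf_proj[of 3 4]])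
  qed (auto simp: eval_nat_numeral)
  then show ?thesis by (rule rf_cong) (auto simp: nth_tl eval_nat_numeral)
qed

lemma rf_ifz: "rf n c \<Longrightarrow> rf n a \<Longrightarrow> rf n b \<Longrightarrow> rf n (\<lambda>xs. if c xs = 0 then a xs else b xs)"
  using rf_comp3[of "\<lambda>c a b. if c = 0 then a else b" n c a b] rf_ifz0 by simp

lemma rf_if_le: "rf n e1 \<Longrightarrow> rf n e2 \<Longrightarrow> rf n a \<Longrightarrow> rf n b \<Longrightarrow> rf n (\<lambda>xs. if e1 xs \<le> e2 xs then a xs else b xs)"
  using rf_ifz[OF rf_sub[of n e1 e2], of a b] by simp

lemma rf_if_eq: "rf n e1 \<Longrightarrow> rf n e2 \<Longrightarrow> rf n a \<Longrightarrow> rf n b \<Longrightarrow> rf n (\<lambda>xs. if e1 xs = e2 xs then a xs else b xs)"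
  apply (rule rf_cong[OF rf_ifz[OF rf_add[OF rf_sub[of n e1 e2] rf_sub[of n e2 e1]], of a b]])
  by auto

lemma rf_max: "rf n e1 \<Longrightarrow> rf n e2 \<Longrightarrow> rf n (\<lambda>xs. max (e1 xs) (e2 xs))"
  by (rule rf_cong[OF rf_if_le[of n e1 e2 e2 e1]]) (auto simp: max_def)

lemma rf_min: "rf n e1 \<Longrightarrow> rf n e2 \<Longrightarrow> rf n (\<lambda>xs. min (e1 xs) (e2 xs))"
  by (rule rf_cong[OF rf_if_le[of n e1 e2 e1 e2]]) (auto simp: min_def)

lemma rf_tri0: "rf 1 (\<lambda>xs. triangle (xs!0))"
proof -
  have g: "rf 2 (\<lambda>ys. ys!1 + Suc (ys!0))" by (intro rf_add rf_Suc rf_proj) auto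
  have "rf (Suc 0) (\<lambda>xs. (\<lambda>k xs. triangle k) (xs!0) (tl xs))"
  proof (rule rf_prim2[OF rf_const[of 0 0] g])
  qed auto
  then show ?thesis by simp
qed

lemma rf_tri: "rf n e \<Longrightarrow> rf n (\<lambda>xs. triangle (e xs))"
  by (rule rf_comp1[OF rf_tri0])

lemma rf_fact0: "rf 1 (\<lambda>xs. fact (xs!0))"
proof -
  have g: "rf 2 (\<lambda>ys. Suc (ys!0) * ys!1)" by (intro rf_mult rf_Suc rf_proj) auto
  have "rf (Suc 0) (\<lambda>xs. (\<lambda>k xs. fact k) (xs!0) (tl xs))"
  proof (rule rf_prim2[OF rf_const[of 0 1] g])
  qed auto
  then show ?thesis by simp
qed

lemma rf_fact: "rf n e \<Longrightarrow> rf n (\<lambda>xs. fact (e xs))"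
  by (rule rf_comp1[OF rf_fact0])

lemma rf_penc: "rf n e1 \<Longrightarrow> rf n e2 \<Longrightarrow> rf n (\<lambda>xs. prod_encode (e1 xs, e2 xs))"
  unfolding prod_encode_def by (auto intro!: rf_add rf_tri)


fun sS :: "nat \<Rightarrow> nat \<Rightarrow> nat" where
  "sS 0 n = 0"
| "sS (Suc k) n = (if triangle (Suc (sS k n)) \<le> n then Suc (sS k n) else sS k n)"

lemma rf_sS0: "rf 2 (\<lambda>xs. sS (xs!0) (xs!1))"
proof -
  have g: "rf 3 (\<lambda>ys. if triangle (Suc (ys!1)) \<le> ys!2 then Suc (ys!1) else ys!1)"
    by (intro rf_if_le rf_tri rf_Suc rf_proj) auto
  have "rf 2 (\<lambda>xs. (\<lambda>k xs. sS k (xs!0)) (xs!0) (tl xs))"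
  proof (rule rf_prim2[OF rf_const[of 1 0] g])
  qed (auto simp: eval_nat_numeral)
  then show ?thesis by (rule rf_cong) (auto simp: nth_tl)
qed

lemma rf_sS: "rf n e1 \<Longrightarrow> rf n e2 \<Longrightarrow> rf n (\<lambda>xs. sS (e1 xs) (e2 xs))"
  by (rule rf_comp2[OF rf_sS0])

lemma triangle_ge: "s \<le> triangle s"
  by (induction s) auto

lemma triangle_mono: "i \<le> j \<Longrightarrow> triangle i \<le> triangle j"
  by (induction j) (auto simp: le_Suc_eq)

lemma sS_val:
  assumes "n = triangle s + a" "a \<le> s"
  shows "sS k n = min k s"
proof (induction k)
  case 0 then show ?case by simp
next
  case (Suc k)
  show ?case
  proof (cases "k < s")
    case True
    then have "triangle (Suc k) \<le> n" using triangle_mono[of "Suc k" s] assms by auto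
    then show ?thesis using Suc True by auto
  next
    case False
    then have "\<not> triangle (Suc s) \<le> n" using assms by simp
    then show ?thesis using Suc False by auto
  qed
qed

definition pd1 :: "nat \<Rightarrow> nat" where "pd1 n = n - triangle (sS n n)"
definition pd2 :: "nat \<Rightarrow> nat" where "pd2 n = sS n n - pd1 n"

lemma pd_eq: "prod_decode n = (pd1 n, pd2 n)"
proof -
  obtain a b where ab: "prod_decode n = (a, b)" by (cases "prod_decode n")
  have n: "n = triangle (a + b) + a"
    using prod_decode_inverse[of n] ab by (simp add: prod_encode_def)
  have "a + b \<le> n" using n triangle_ge[of "a+b"] by simp
  then have s: "sS n n = a + b" using sS_val[OF n, of n] by simp
  show ?thesis using ab s n by (simp add: pd1_def pd2_def)
qed

lemma rf_fstd: "rf n e \<Longrightarrow> rf n (\<lambda>xs. fst (prod_decode (e xs)))"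
  unfolding pd_eq pd1_def by (auto intro!: rf_sub rf_tri rf_sS)

lemma rf_sndd: "rf n e \<Longrightarrow> rf n (\<lambda>xs. snd (prod_decode (e xs)))"
  unfolding pd_eq pd1_def pd2_def by (auto intro!: rf_sub rf_tri rf_sS)

definition hdL :: "nat \<Rightarrow> nat" where "hdL L = fst (prod_decode (L - 1))"
definition tlL :: "nat \<Rightarrow> nat" where "tlL L = snd (prod_decode (L - 1))"

lemma prod_decode_0: "prod_decode 0 = (0, 0)"
  using prod_encode_inverse[of "(0,0)"] by (simp add: prod_encode_def)

lemma hdL_simps[simp]: "hdL 0 = 0" "hdL (Suc (prod_encode (a, b))) = a"
  by (auto simp: hdL_def prod_decode_0)
lemma tlL_simps[simp]: "tlL 0 = 0" "tlL (Suc (prod_encode (a, b))) = b"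
  by (auto simp: tlL_def prod_decode_0)

fun drp :: "nat \<Rightarrow> nat \<Rightarrow> nat" where
  "drp 0 L = L"
| "drp (Suc k) L = tlL (drp k L)"

definition nthL :: "nat \<Rightarrow> nat \<Rightarrow> nat" where "nthL L k = hdL (drp k L)"

lemma drp_list: "drp k (list_encode zs) = list_encode (drop k zs)"
proof (induction k)
  case 0 then show ?case by simp
next
  case (Suc k)
  show ?case
  proof (cases "drop k zs")
    case Nil
    then have "drop (Suc k) zs = []" by (simp add: drop_Suc tl_drop[symmetric])
    then show ?thesis using Suc Nil by simp
  next
    case (Cons x ys)
    then have "drop (Suc k) zs = ys" by (simp add: drop_Suc tl_drop[symmetric])
    then show ?thesis using Suc Cons by simp
  qed
qed

lemma nthL_list: "nthL (list_encode zs) j = (if j < length zs then zs ! j else 0)"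
  unfolding nthL_def drp_list
  by (cases "drop j zs") (auto simp: Cons_nth_drop_Suc[symmetric] dest: arg_cong[of _ _ length])

lemma rf_drp0: "rf 2 (\<lambda>xs. drp (xs!0) (xs!1))"
proof -
  have g: "rf 3 (\<lambda>ys. tlL (ys!1))"
    unfolding tlL_def by (intro rf_sndd rf_sub rf_proj rf_const) auto
  have "rf 2 (\<lambda>xs. (\<lambda>k xs. drp k (xs!0)) (xs!0) (tl xs))"
  proof (rule rf_prim2[OF rf_proj[of 0 1] g])
  qed (auto simp: eval_nat_numeral)
  then show ?thesis by (rule rf_cong) (auto simp: nth_tl)
qed

lemma rf_nthL: "rf n e1 \<Longrightarrow> rf n e2 \<Longrightarrow> rf n (\<lambda>xs. nthL (e1 xs) (e2 xs))"
proof -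
  assume a: "rf n e1" "rf n e2"
  have b: "rf 2 (\<lambda>ys. hdL (drp (ys!0) (ys!1)))"
    unfolding hdL_def by (intro rf_fstd rf_sub rf_const rf_comp2[OF rf_drp0] rf_proj) auto
  show ?thesis
    using rf_comp2[of "\<lambda>k L. hdL (drp k L)", OF b a(2) a(1)] by (simp add: nthL_def)
qed


lemma rf_hdL: "rf n e \<Longrightarrow> rf n (\<lambda>xs. hdL (e xs))"
  unfolding hdL_def by (intro rf_fstd rf_sub rf_const)

definition step :: "nat \<Rightarrow> nat \<Rightarrow> nat \<Rightarrow> nat \<Rightarrow> nat" where
  "step n L g N =
    (if fst (prod_decode n) = 0 then min N (nthL g (snd (prod_decode n)))
     else if fst (prod_decode n) = 1 then 0
     else if fst (prod_decode n) = 2 then N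
     else if fst (prod_decode n) = 3 then max (nthL L (n - Suc (fst (prod_decode (snd (prod_decode n))))))
                                           (nthL L (n - Suc (snd (prod_decode (snd (prod_decode n))))))
     else if fst (prod_decode n) = 4 then min (nthL L (n - Suc (fst (prod_decode (snd (prod_decode n))))))
                                           (nthL L (n - Suc (snd (prod_decode (snd (prod_decode n))))))
     else if fst (prod_decode n) = 5 then N - nthL L (n - Suc (snd (prod_decode n)))
     else 0)"

lemma rf_step0: "rf 4 (\<lambda>ys. step (ys!0) (ys!1) (ys!2) (ys!3))"
  unfolding step_def
  by (intro rf_if_eq rf_min rf_max rf_sub rf_nthL rf_fstd rf_sndd rf_Suc rf_proj rf_const) auto

lemma rf_step: "rf n e1 \<Longrightarrow> rf n e2 \<Longrightarrow> rf n e3 \<Longrightarrow> rf n e4 \<Longrightarrow> rf n (\<lambda>xs. step (e1 xs) (e2 xs) (e3 xs) (e4 xs))"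
  by (rule rf_comp4[OF rf_step0])

fun TT :: "nat \<Rightarrow> nat \<Rightarrow> nat \<Rightarrow> nat" where
  "TT 0 g N = 0"
| "TT (Suc k) g N = Suc (prod_encode (step k (TT k g N) g N, TT k g N))"

lemma rf_TT0: "rf 3 (\<lambda>xs. TT (xs!0) (xs!1) (xs!2))"
proof -
  have g: "rf 4 (\<lambda>ys. Suc (prod_encode (step (ys!0) (ys!1) (ys!2) (ys!3), ys!1)))"
    by (intro rf_Suc rf_penc rf_step rf_proj) auto
  have "rf 3 (\<lambda>xs. (\<lambda>k xs. TT k (xs!0) (xs!1)) (xs!0) (tl xs))"
  proof (rule rf_prim2[OF rf_const[of 2 0] g])
  qed (auto simp: eval_nat_numeral)
  then show ?thesis by (rule rf_cong) (auto simp: nth_tl eval_nat_numeral)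
qed

lemma rf_TT: "rf n e1 \<Longrightarrow> rf n e2 \<Longrightarrow> rf n e3 \<Longrightarrow> rf n (\<lambda>xs. TT (e1 xs) (e2 xs) (e3 xs))"
  by (rule rf_comp3[OF rf_TT0])

definition cevv :: "nat \<Rightarrow> nat \<Rightarrow> nat \<Rightarrow> nat" where
  "cevv g N n = hdL (TT (Suc n) g N)"

lemma rf_cevv: "rf n e1 \<Longrightarrow> rf n e2 \<Longrightarrow> rf n e3 \<Longrightarrow> rf n (\<lambda>xs. cevv (e1 xs) (e2 xs) (e3 xs))"
  unfolding cevv_def by (intro rf_hdL rf_TT rf_Suc)

definition q :: "nat \<Rightarrow> nat \<Rightarrow> nat \<Rightarrow> nat \<Rightarrow> nat \<Rightarrow> nat" where
  "q g N L1 L2 j = (if cevv g N (nthL L1 j) = cevv g N (nthL L2 j) then 1 else 0)"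

fun AJ :: "nat \<Rightarrow> nat \<Rightarrow> nat \<Rightarrow> nat \<Rightarrow> nat \<Rightarrow> nat" where
  "AJ 0 g N L1 L2 = 1"
| "AJ (Suc k) g N L1 L2 = AJ k g N L1 L2 * q g N L1 L2 k"

lemma rf_AJ0: "rf 5 (\<lambda>xs. AJ (xs!0) (xs!1) (xs!2) (xs!3) (xs!4))"
proof -
  have g: "rf 6 (\<lambda>ys. ys!1 * q (ys!2) (ys!3) (ys!4) (ys!5) (ys!0))"
    unfolding q_def by (intro rf_mult rf_if_eq rf_cevv rf_nthL rf_proj rf_const) auto
  have "rf 5 (\<lambda>xs. (\<lambda>k xs. AJ k (xs!0) (xs!1) (xs!2) (xs!3)) (xs!0) (tl xs))"
  proof (rule rf_prim2[OF rf_const[of 4 1] g])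
  qed (auto simp: eval_nat_numeral)
  then show ?thesis by (rule rf_cong) (auto simp: nth_tl eval_nat_numeral)
qed

fun AG :: "nat \<Rightarrow> nat \<Rightarrow> nat \<Rightarrow> nat \<Rightarrow> nat" where
  "AG 0 N L1 L2 = 1"
| "AG (Suc k) N L1 L2 = AG k N L1 L2 * AJ L1 k N L1 L2"

lemma rf_AG0: "rf 4 (\<lambda>xs. AG (xs!0) (xs!1) (xs!2) (xs!3))"
proof -
  have g: "rf 5 (\<lambda>ys. ys!1 * AJ (ys!3) (ys!0) (ys!2) (ys!3) (ys!4))"
    by (intro rf_mult rf_comp5[OF rf_AJ0] rf_proj) auto
  have "rf 4 (\<lambda>xs. (\<lambda>k xs. AG k (xs!0) (xs!1) (xs!2)) (xs!0) (tl xs))"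
  proof (rule rf_prim2[OF rf_const[of 3 1] g])
  qed (auto simp: eval_nat_numeral)
  then show ?thesis by (rule rf_cong) (auto simp: nth_tl eval_nat_numeral)
qed

fun RR :: "nat \<Rightarrow> nat \<Rightarrow> nat" where
  "RR 0 N = 0"
| "RR (Suc k) N = Suc (prod_encode (N, RR k N))"

lemma rf_RR0: "rf 2 (\<lambda>xs. RR (xs!0) (xs!1))"
proof -
  have g: "rf 3 (\<lambda>ys. Suc (prod_encode (ys!2, ys!1)))"
    by (intro rf_Suc rf_penc rf_proj) auto
  have "rf 2 (\<lambda>xs. (\<lambda>k xs. RR k (xs!0)) (xs!0) (tl xs))"
  proof (rule rf_prim2[OF rf_const[of 1 0] g])
  qed (auto simp: eval_nat_numeral)
  then show ?thesis by (rule rf_cong) (auto simp: nth_tl eval_nat_numeral)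
qed

definition dec :: "nat \<Rightarrow> nat" where
  "dec c = AG (Suc (RR (fst (prod_decode c)) (fact (4 * fst (prod_decode c) + 4))))
              (fact (4 * fst (prod_decode c) + 4))
              (fst (prod_decode (snd (prod_decode c)))) (snd (prod_decode (snd (prod_decode c))))"

lemma rf_dec: "rf 1 (\<lambda>xs. dec (xs!0))"
  unfolding dec_def
  by (intro rf_comp4[OF rf_AG0] rf_Suc rf_comp2[OF rf_RR0] rf_fact rf_add rf_mult rf_fstd rf_sndd rf_proj rf_const) auto


fun evN :: "(nat \<Rightarrow> nat) \<Rightarrow> nat \<Rightarrow> tm \<Rightarrow> nat" where
  "evN y N (Var i) = y i"
| "evN y N Zero = 0"
| "evN y N One = N"
| "evN y N (Join s t) = max (evN y N s) (evN y N t)"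
| "evN y N (Meet s t) = min (evN y N s) (evN y N t)"
| "evN y N (Neg t) = N - evN y N t"

lemma cevv_step: "cevv g N n = step n (TT n g N) g N"
  by (simp add: cevv_def)

lemma TT_list: "TT n g N = list_encode (map (cevv g N) (rev [0..<n]))"
  by (induction n) (simp_all add: cevv_step)

lemma look: "k < n \<Longrightarrow> nthL (TT n g N) (n - Suc k) = cevv g N k"
  by (simp add: TT_list nthL_list rev_nth)

lemma penc_lt: "0 < a \<Longrightarrow> b < prod_encode (a, b)"
  using triangle_ge[of "a+b"] by (simp add: prod_encode_def)

lemma cev_tm: "cevv g N (tm_code t) = evN (\<lambda>i. min N (nthL g i)) N t"
proof (induction t)
  case (Var x) then show ?case by (simp add: cevv_step step_def)
next
  case Zero then show ?case by (simp add: cevv_step step_def)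
next
  case One then show ?case by (simp add: cevv_step step_def)
next
  case (Join s t)
  let ?c = "prod_encode (3, prod_encode (tm_code s, tm_code t))"
  have lt: "prod_encode (tm_code s, tm_code t) < ?c" by (rule penc_lt) simp
  have "tm_code s < ?c" "tm_code t < ?c" using lt le_prod_encode_1 le_prod_encode_2 order.strict_trans1 by blast+
  then show ?case using Join by (simp add: cevv_step[of g N ?c] step_def look)
next
  case (Meet s t)
  let ?c = "prod_encode (4, prod_encode (tm_code s, tm_code t))"
  have lt: "prod_encode (tm_code s, tm_code t) < ?c" by (rule penc_lt) simp
  have "tm_code s < ?c" "tm_code t < ?c" using lt le_prod_encode_1 le_prod_encode_2 order.strict_trans1 by blast+
  then show ?case using Meet by (simp add: cevv_step[of g N ?c] step_def look)
next
  case (Neg t)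
  let ?c = "prod_encode (5, tm_code t)"
  have "tm_code t < ?c" by (rule penc_lt) simp
  then show ?case using Neg by (simp add: cevv_step[of g N ?c] step_def look)
qed

lemma AJ_eq: "AJ k g N L1 L2 = (if \<forall>j<k. cevv g N (nthL L1 j) = cevv g N (nthL L2 j) then 1 else 0)"
  by (induction k) (auto simp: q_def less_Suc_eq)

lemma AG_eq: "AG k N L1 L2 = (if \<forall>g<k. \<forall>j<L1. cevv g N (nthL L1 j) = cevv g N (nthL L2 j) then 1 else 0)"
  by (induction k) (auto simp: AJ_eq less_Suc_eq)

lemma RR_eq: "RR m N = list_encode (replicate m N)"
  by (induction m) auto

lemma length_le_list_encode: "length zs \<le> list_encode zs"
  by (induction zs) (auto simp: intro: order.trans[OF _ le_prod_encode_2])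

definition yOf :: "nat \<Rightarrow> nat \<Rightarrow> nat \<Rightarrow> nat" where "yOf g N i = min N (nthL g i)"

lemma dec_eq:
  assumes "length ts1 = length ts2"
  shows "dec (input_code m ts1 ts2) =
    (if \<forall>g < Suc (list_encode (replicate m (fact (4*m+4)))). \<forall>j < length ts1.
        evN (yOf g (fact (4*m+4))) (fact (4*m+4)) (ts1!j) = evN (yOf g (fact (4*m+4))) (fact (4*m+4)) (ts2!j)
     then 1 else 0)"
proof -
  let ?L1 = "list_encode (map tm_code ts1)" and ?L2 = "list_encode (map tm_code ts2)"
  have lenL: "length ts1 \<le> ?L1" using length_le_list_encode[of "map tm_code ts1"] by simp
  have "(\<forall>j<?L1. cevv g N (nthL ?L1 j) = cevv g N (nthL ?L2 j)) \<longleftrightarrow>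
        (\<forall>j<length ts1. evN (yOf g N) N (ts1!j) = evN (yOf g N) N (ts2!j))" for g N
  proof
    assume H: "\<forall>j<?L1. cevv g N (nthL ?L1 j) = cevv g N (nthL ?L2 j)"
    show "\<forall>j<length ts1. evN (yOf g N) N (ts1!j) = evN (yOf g N) N (ts2!j)"
    proof (intro allI impI)
      fix j assume j: "j < length ts1"
      then have "j < ?L1" using lenL by simp
      then show "evN (yOf g N) N (ts1!j) = evN (yOf g N) N (ts2!j)"
        using H j assms by (auto simp: nthL_list cev_tm yOf_def[abs_def])
    qed
  next
    assume H: "\<forall>j<length ts1. evN (yOf g N) N (ts1!j) = evN (yOf g N) N (ts2!j)"
    show "\<forall>j<?L1. cevv g N (nthL ?L1 j) = cevv g N (nthL ?L2 j)"
      using H assms by (auto simp: nthL_list cev_tm yOf_def[abs_def])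
  qed
  then show ?thesis by (simp add: dec_def input_code_def AG_eq RR_eq)
qed


definition SS :: "(nat \<Rightarrow> real) \<Rightarrow> nat \<Rightarrow> real set" where
  "SS x m = {0, 1/2, 1} \<union> x ` {..<m} \<union> (\<lambda>i. 1 - x i) ` {..<m}"

definition KK :: "(nat \<Rightarrow> real) \<Rightarrow> nat \<Rightarrow> nat" where
  "KK x m = card (SS x m) - 1"

definition DD :: "(nat \<Rightarrow> real) \<Rightarrow> nat \<Rightarrow> real \<Rightarrow> int" where
  "DD x m s = int (card {u\<in>SS x m. u < s}) - int (card {u\<in>SS x m. s < u})"

lemma SS_finite: "finite (SS x m)" by (simp add: SS_def)

lemma SS_01: "0 \<in> SS x m" "1 \<in> SS x m" "1/2 \<in> SS x m" by (auto simp: SS_def)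

lemma SS_range: "(\<forall>i<m. 0 \<le> x i \<and> x i \<le> 1) \<Longrightarrow> s \<in> SS x m \<Longrightarrow> 0 \<le> s \<and> s \<le> 1"
  by (auto simp: SS_def)

lemma SS_neg: "s \<in> SS x m \<Longrightarrow> 1 - s \<in> SS x m"
  by (auto simp: SS_def)

lemma SS_card_ge: "3 \<le> card (SS x m)"
proof -
  have "{0, 1/2, 1::real} \<subseteq> SS x m" by (auto simp: SS_def)
  from card_mono[OF SS_finite this] show ?thesis by simp
qed

lemma SS_card_le: "card (SS x m) \<le> 2*m + 3"
proof -
  have "card (SS x m) \<le> card ({0, 1/2, 1::real} \<union> x ` {..<m}) + card ((\<lambda>i. 1 - x i) ` {..<m})"
    unfolding SS_def by (rule card_Un_le)
  also have "\<dots> \<le> (card {0, 1/2, 1::real} + card (x ` {..<m})) + m"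
    by (intro add_mono card_Un_le) (auto intro: card_image_le[THEN order.trans])
  also have "\<dots> \<le> 3 + m + m"
    by (intro add_mono) (auto intro: card_image_le[THEN order.trans] card_insert_le_m1)
  finally show ?thesis by simp
qed

lemma DD_strict:
  assumes "s \<in> SS x m" "s' \<in> SS x m" "s < s'"
  shows "DD x m s < DD x m s'"
proof -
  have a: "{u\<in>SS x m. u < s} \<subset> {u\<in>SS x m. u < s'}" using assms by auto
  have b: "{u\<in>SS x m. s' < u} \<subseteq> {u\<in>SS x m. s < u}" using assms by auto
  have "card {u\<in>SS x m. u < s} < card {u\<in>SS x m. u < s'}"
    by (rule psubset_card_mono[OF _ a]) (simp add: SS_finite)
  moreover have "card {u\<in>SS x m. s' < u} \<le> card {u\<in>SS x m. s < u}"
    by (rule card_mono[OF _ b]) (simp add: SS_finite)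
  ultimately show ?thesis by (simp add: DD_def)
qed

lemma card_flip: "card {u\<in>SS x m. u < 1 - s} = card {u\<in>SS x m. s < u}"
proof -
  have "{u\<in>SS x m. u < 1 - s} = (\<lambda>u. 1 - u) ` {u\<in>SS x m. s < u}"
  proof
    show "{u \<in> SS x m. u < 1 - s} \<subseteq> (\<lambda>u. 1 - u) ` {u \<in> SS x m. s < u}"
    proof
      fix u assume "u \<in> {u \<in> SS x m. u < 1 - s}"
      then have "1 - u \<in> {u \<in> SS x m. s < u}" "u = 1 - (1 - u)" using SS_neg by auto
      then show "u \<in> (\<lambda>u. 1 - u) ` {u \<in> SS x m. s < u}" by blast
    qed
  qed (auto simp: SS_neg)
  moreover have "inj_on (\<lambda>u::real. 1 - u) A" for A by (auto simp: inj_on_def)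
  ultimately show ?thesis by (simp add: card_image)
qed

lemma DD_neg: "DD x m (1 - s) = - DD x m s"
proof -
  have "card {u\<in>SS x m. 1 - s < u} = card {u\<in>SS x m. u < s}"
    using card_flip[of x m "1 - s"] by simp
  then show ?thesis using card_flip[of x m s] by (simp add: DD_def)
qed

lemma DD_0: "DD x m 0 = - int (KK x m)" if "\<forall>i<m. 0 \<le> x i \<and> x i \<le> 1"
proof -
  have "{u\<in>SS x m. u < 0} = {}" using SS_range[OF that] by force
  moreover have "{u\<in>SS x m. 0 < u} = SS x m - {0}" using SS_range[OF that] by force
  ultimately show ?thesis using SS_01 SS_card_ge[of x m]
    by (simp add: DD_def KK_def SS_finite card_Diff_singleton of_nat_diff)
qed

lemma DD_1: "DD x m 1 = int (KK x m)" if "\<forall>i<m. 0 \<le> x i \<and> x i \<le> 1"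
  using DD_neg[of x m 0] DD_0[OF that] by simp

definition phi :: "(nat \<Rightarrow> real) \<Rightarrow> nat \<Rightarrow> real \<Rightarrow> real" where
  "phi x m s = real_of_int (DD x m s + int (KK x m)) / (2 * real (KK x m))"

lemma KK_pos: "2 \<le> KK x m" using SS_card_ge[of x m] by (simp add: KK_def)

lemma phi_strict: "s \<in> SS x m \<Longrightarrow> s' \<in> SS x m \<Longrightarrow> s < s' \<Longrightarrow> phi x m s < phi x m s'"
  using DD_strict[of s x m s'] KK_pos[of x m] unfolding phi_def
  by (intro divide_strict_right_mono) auto

lemma phi_mono: "s \<in> SS x m \<Longrightarrow> s' \<in> SS x m \<Longrightarrow> s \<le> s' \<Longrightarrow> phi x m s \<le> phi x m s'"
  using phi_strict[of s x m s'] by (cases "s = s'") auto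

lemma phi_inj: "s \<in> SS x m \<Longrightarrow> s' \<in> SS x m \<Longrightarrow> phi x m s = phi x m s' \<Longrightarrow> s = s'"
  using phi_strict[of s x m s'] phi_strict[of s' x m s] by (cases s s' rule: linorder_cases) auto

lemma phi_neg: "phi x m (1 - s) = 1 - phi x m s"
  using KK_pos[of x m] unfolding phi_def DD_neg by (simp add: field_simps)

lemma phi_0: "\<forall>i<m. 0 \<le> x i \<and> x i \<le> 1 \<Longrightarrow> phi x m 0 = 0"
  using KK_pos[of x m] by (simp add: phi_def DD_0)

lemma phi_1: "\<forall>i<m. 0 \<le> x i \<and> x i \<le> 1 \<Longrightarrow> phi x m 1 = 1"
  using KK_pos[of x m] by (simp add: phi_def DD_1)

lemma DD_bounds:
  assumes "\<forall>i<m. 0 \<le> x i \<and> x i \<le> 1" "s \<in> SS x m"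
  shows "- int (KK x m) \<le> DD x m s \<and> DD x m s \<le> int (KK x m)"
proof -
  have r: "0 \<le> s" "s \<le> 1" using SS_range[OF assms] by auto
  have "DD x m 0 \<le> DD x m s" using DD_strict[of 0 x m s] SS_01 assms(2) r by (cases "s = 0") auto
  moreover have "DD x m s \<le> DD x m 1" using DD_strict[of s x m 1] SS_01 assms(2) r by (cases "s = 1") auto
  ultimately show ?thesis using DD_0[OF assms(1)] DD_1[OF assms(1)] by simp
qed


lemma evN_le: "(\<forall>i. y i \<le> N) \<Longrightarrow> evN y N t \<le> N"
  by (induction t) auto

lemma evN_real:
  assumes "0 < N" "\<forall>i. y i \<le> N"
  shows "tm_eval (\<lambda>i. real (y i) / real N) t = real (evN y N t) / real N"
proof (induction t)
  case (Join s t) then show ?case by (simp only: tm_eval.simps evN.simps of_nat_max max_divide_distrib_right) simp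
next
  case (Meet s t) then show ?case by (simp only: tm_eval.simps evN.simps of_nat_min min_divide_distrib_right) simp
next
  case (Neg t) then show ?case using evN_le[OF assms(2), of t] assms(1) by (simp add: of_nat_diff field_simps)
qed (use assms in auto)

lemma yOf_le: "yOf g N i \<le> N" by (simp add: yOf_def)

lemma key_ind:
  assumes x01: "\<forall>i<m. 0 \<le> x i \<and> x i \<le> 1" and z: "\<forall>i<m. z i = phi x m (x i)"
  shows "(\<forall>v\<in>set (occs t). v < m) \<Longrightarrow> tm_eval x t \<in> SS x m \<and> phi x m (tm_eval x t) = tm_eval z t"
proof (induction t)
  case (Var i) then show ?case using z by (auto simp: SS_def)
next
  case Zero then show ?case using phi_0[OF x01] SS_01 by auto
next
  case One then show ?case using phi_1[OF x01] SS_01 by auto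
next
  case (Join s t)
  then have s: "tm_eval x s \<in> SS x m" "phi x m (tm_eval x s) = tm_eval z s"
    and t: "tm_eval x t \<in> SS x m" "phi x m (tm_eval x t) = tm_eval z t" by auto
  show ?case using s t phi_mono[OF s(1) t(1)] phi_mono[OF t(1) s(1)] by (auto simp: max_def)
next
  case (Meet s t)
  then have s: "tm_eval x s \<in> SS x m" "phi x m (tm_eval x s) = tm_eval z s"
    and t: "tm_eval x t \<in> SS x m" "phi x m (tm_eval x t) = tm_eval z t" by auto
  show ?case using s t phi_mono[OF s(1) t(1)] phi_mono[OF t(1) s(1)] by (auto simp: min_def)
next
  case (Neg t) then show ?case by (auto simp: SS_neg phi_neg)
qed

definition NN :: "nat \<Rightarrow> nat" where "NN m = fact (4*m+4)"

definition yy :: "(nat \<Rightarrow> real) \<Rightarrow> nat \<Rightarrow> nat \<Rightarrow> nat" where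
  "yy x m i = nat (DD x m (x i) + int (KK x m)) * (NN m div (2 * KK x m))"

lemma KK_dvd: "2 * KK x m dvd NN m"
  unfolding NN_def using KK_pos[of x m] SS_card_le[of x m]
  by (intro dvd_fact) (auto simp: KK_def)

lemma yy_props:
  assumes x01: "\<forall>i<m. 0 \<le> x i \<and> x i \<le> 1" and i: "i < m"
  shows "yy x m i \<le> NN m" "real (yy x m i) / real (NN m) = phi x m (x i)"
proof -
  obtain c where c: "NN m = 2 * KK x m * c" using KK_dvd[of x m] by blast
  have Kp: "2 \<le> KK x m" by (rule KK_pos)
  have cp: "0 < c" using c by (metis NN_def fact_gt_zero mult_0_right not_gr0)
  have xs: "x i \<in> SS x m" using i by (auto simp: SS_def)
  have b: "- int (KK x m) \<le> DD x m (x i) \<and> DD x m (x i) \<le> int (KK x m)" by (rule DD_bounds[OF x01 xs])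
  have dv: "NN m div (2 * KK x m) = c" using c Kp by simp
  have e: "nat (DD x m (x i) + int (KK x m)) \<le> 2 * KK x m" using b by linarith
  show "yy x m i \<le> NN m" unfolding yy_def dv c using e by simp
  have "real (nat (DD x m (x i) + int (KK x m))) = real_of_int (DD x m (x i) + int (KK x m))" using b by simp
  then show "real (yy x m i) / real (NN m) = phi x m (x i)"
    unfolding yy_def dv c phi_def using cp Kp by (simp add: field_simps)
qed

lemma penc_mono: "a \<le> c \<Longrightarrow> b \<le> d \<Longrightarrow> prod_encode (a, b) \<le> prod_encode (c, d)"
  unfolding prod_encode_def using triangle_mono[of "a+b" "c+d"] by simp

lemma list_encode_mono: "length xs = length ys \<Longrightarrow> \<forall>i<length xs. xs!i \<le> ys!i \<Longrightarrow> list_encode xs \<le> list_encode ys"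
proof (induction xs arbitrary: ys)
  case Nil then show ?case by simp
next
  case (Cons a xs)
  then obtain b ys' where ys: "ys = b # ys'" by (cases ys) auto
  have "a \<le> b" using Cons.prems ys by force
  moreover have "list_encode xs \<le> list_encode ys'"
    using Cons.IH[of ys'] Cons.prems ys by force
  ultimately show ?case using ys penc_mono by simp
qed

lemma grid_iff:
  assumes len: "length ts1 = length ts2"
    and vars: "\<forall>t\<in>set ts1 \<union> set ts2. \<forall>v\<in>set (occs t). v < m"
  shows "same_morphism m ts1 ts2 \<longleftrightarrow>
    (\<forall>g < Suc (list_encode (replicate m (NN m))). \<forall>j < length ts1.
        evN (yOf g (NN m)) (NN m) (ts1!j) = evN (yOf g (NN m)) (NN m) (ts2!j))"
  (is "?L \<longleftrightarrow> ?R")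
proof
  let ?N = "NN m"
  have Np: "0 < ?N" by (simp add: NN_def)
  assume L: ?L
  show ?R
  proof (intro allI impI)
    fix g j assume j: "j < length ts1"
    let ?x = "\<lambda>i. real (yOf g ?N i) / real ?N"
    have "\<forall>i<m. 0 \<le> ?x i \<and> ?x i \<le> 1"
    proof (intro allI impI conjI)
      fix i show "0 \<le> ?x i" by simp
      show "?x i \<le> 1" using Np yOf_le[of g ?N i] by (simp add: divide_le_eq_1)
    qed
    then have "map (tm_eval ?x) ts1 = map (tm_eval ?x) ts2" using L by (simp add: same_morphism_def)
    then have "(map (tm_eval ?x) ts1) ! j = (map (tm_eval ?x) ts2) ! j" by (rule arg_cong)
    then have "tm_eval ?x (ts1!j) = tm_eval ?x (ts2!j)" using j len by (simp only: nth_map)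
    then show "evN (yOf g ?N) ?N (ts1!j) = evN (yOf g ?N) ?N (ts2!j)"
      using evN_real[OF Np, of "yOf g ?N"] yOf_le Np by simp
  qed
next
  let ?N = "NN m"
  have Np: "0 < ?N" by (simp add: NN_def)
  assume R: ?R
  have "map (tm_eval x) ts1 = map (tm_eval x) ts2" if x01: "\<forall>i<m. 0 \<le> x i \<and> x i \<le> 1" for x
  proof (rule nth_equalityI)
    show "length (map (tm_eval x) ts1) = length (map (tm_eval x) ts2)" using len by simp
    fix j assume "j < length (map (tm_eval x) ts1)"
    then have j: "j < length ts1" by simp
    let ?g = "list_encode (map (yy x m) [0..<m])"
    have "?g \<le> list_encode (replicate m ?N)"
      by (rule list_encode_mono) (auto simp: yy_props[OF x01])
    then have "?g < Suc (list_encode (replicate m ?N))" by simp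
    then have E: "evN (yOf ?g ?N) ?N (ts1!j) = evN (yOf ?g ?N) ?N (ts2!j)" using R j by blast
    let ?z = "\<lambda>i. real (yOf ?g ?N i) / real ?N"
    have z: "\<forall>i<m. ?z i = phi x m (x i)"
      using yy_props[OF x01] by (simp add: yOf_def nthL_list)
    have E2: "tm_eval ?z (ts1!j) = tm_eval ?z (ts2!j)"
      using E evN_real[OF Np, of "yOf ?g ?N"] yOf_le by simp
    have v1: "\<forall>v\<in>set (occs (ts1!j)). v < m" using vars j by auto
    have v2: "\<forall>v\<in>set (occs (ts2!j)). v < m" using vars j len by auto
    note k1 = key_ind[OF x01 z v1] and k2 = key_ind[OF x01 z v2]
    have "tm_eval x (ts1!j) = tm_eval x (ts2!j)"
      using phi_inj[of "tm_eval x (ts1!j)" x m "tm_eval x (ts2!j)"] k1 k2 E2 by simp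
    then show "map (tm_eval x) ts1 ! j = map (tm_eval x) ts2 ! j" using j len by simp
  qed
  then show ?L using len by (simp add: same_morphism_def)
qed

theorem corollary1:
  assumes "admissible_rules a" and "admissible_sig b"
  shows "\<exists>f. (\<forall>x. \<exists>y. recf_eval f [x] y) \<and>
    (\<forall>m ts1 ts2. length ts1 = length ts2 \<longrightarrow> wf_tuple a b m ts1 \<longrightarrow> wf_tuple a b m ts2 \<longrightarrow>
       recf_eval f [input_code m ts1 ts2] (if same_morphism m ts1 ts2 then 1 else 0))"
proof -
  obtain f where F: "\<forall>xs. length xs = 1 \<longrightarrow> recf_eval f xs (dec (xs!0))"
    using rf_dec unfolding rf_def by blast
  show ?thesis
  proof (intro exI[of _ f] conjI allI impI)
    fix x show "\<exists>y. recf_eval f [x] y" using F by (metis One_nat_def length_Cons list.size(3) nth_Cons_0)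
  next
    fix m ts1 ts2
    assume len: "length ts1 = length ts2" and w1: "wf_tuple a b m ts1" and w2: "wf_tuple a b m ts2"
    have vars: "\<forall>t\<in>set ts1 \<union> set ts2. \<forall>v\<in>set (occs t). v < m"
      using w1 w2 unfolding wf_tuple_def Let_def by auto
    have "dec (input_code m ts1 ts2) = (if same_morphism m ts1 ts2 then 1 else 0)"
      using dec_eq[OF len, of m] grid_iff[OF len vars] by (simp add: NN_def)
    then show "recf_eval f [input_code m ts1 ts2] (if same_morphism m ts1 ts2 then 1 else 0)"
      using F by (metis One_nat_def length_Cons list.size(3) nth_Cons_0)
  qed
qed

end
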